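(* Let $a,b,c,d,e,f,g>0$ with $b+c\ne f$, and let $X=(X^1,X^2)$ be a time-homogeneous Markov chain on $\{(0,0),(0,1),(1,0),(1,1)\}$ (states ordered as listed) with $X_0=(0,0)$ and generator $$\Lambda=\begin{pmatrix}-(a+b+c)&b&a&c\\0&-(d+e)&d&e\\0&0&-f&f\\0&0&g&-g\end{pmatrix}.$$ Then $X^2$ is not a Markov chain with respect to its own filtration $\mathbb F^{X^2}$ (and hence not with respect to $\mathbb F^X$ either).
   Context: $\mathbb F^{X^2}$ and $\mathbb F^X$ denote the natural filtrations of $X^2$ and $X$. *)

theory Defs
  imports "HOL-Probability.Probability"
begin

text \<open>Square matrices of size N represented as functions on indices 0..N-1.\<close>

fun mpow :: "nat \<Rightarrow> (nat \<Rightarrow> nat \<Rightarrow> real) \<Rightarrow> nat \<Rightarrow> nat \<Rightarrow> nat \<Rightarrow> real" where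
  "mpow N A 0 = (\<lambda>i j. if i = j then 1 else 0)"
| "mpow N A (Suc n) = (\<lambda>i j. \<Sum>k<N. mpow N A n i k * A k j)"

definition mexp :: "nat \<Rightarrow> (nat \<Rightarrow> nat \<Rightarrow> real) \<Rightarrow> real \<Rightarrow> nat \<Rightarrow> nat \<Rightarrow> real" where
  "mexp N A t i j = (\<Sum>n. t ^ n / fact n * mpow N A n i j)"

text \<open>State indexing: (0,0) -> 0, (0,1) -> 1, (1,0) -> 2, (1,1) -> 3.\<close>
definition st_idx :: "nat \<times> nat \<Rightarrow> nat" where
  "st_idx x = 2 * fst x + snd x"

definition Gen :: "real \<Rightarrow> real \<Rightarrow> real \<Rightarrow> real \<Rightarrow> real \<Rightarrow> real \<Rightarrow> real \<Rightarrow> nat \<Rightarrow> nat \<Rightarrow> real" where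
  "Gen a b c d e f g i j =
     [[-(a+b+c), b, a, c],
      [0, -(d+e), d, e],
      [0, 0, -f, f],
      [0, 0, g, -g]] ! i ! j"

text \<open>Times range over [0,oo). Finite cylinder events {X u1 = z1, ..., X un = zn} with
  all ui <= s generate F^X_s.\<close>
definition markov_chain_gen ::
  "'w measure \<Rightarrow> (real \<Rightarrow> 'w \<Rightarrow> 's) \<Rightarrow> 's set \<Rightarrow> ('s \<Rightarrow> nat) \<Rightarrow> (nat \<Rightarrow> nat \<Rightarrow> real) \<Rightarrow> bool" where
  "markov_chain_gen M X S idx Q \<longleftrightarrow>
     prob_space M \<and>
     (\<forall>t\<ge>0. X t \<in> measurable M (count_space UNIV)) \<and>
     (\<forall>t\<ge>0. \<forall>\<omega>\<in>space M. X t \<omega> \<in> S) \<and>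
     (\<forall>(cyl :: (real \<times> 's) list) s t i j.
        (\<forall>(u,z)\<in>set cyl. 0 \<le> u \<and> u \<le> s) \<longrightarrow> 0 \<le> s \<longrightarrow> s \<le> t \<longrightarrow> i \<in> S \<longrightarrow> j \<in> S \<longrightarrow>
        measure M {\<omega>\<in>space M. X t \<omega> = j \<and> X s \<omega> = i \<and> (\<forall>(u,z)\<in>set cyl. X u \<omega> = z)}
        = measure M {\<omega>\<in>space M. X s \<omega> = i \<and> (\<forall>(u,z)\<in>set cyl. X u \<omega> = z)}
          * mexp (card S) Q (t - s) (idx i) (idx j))"

text \<open>The discrete-valued process Y is Markov with respect to the natural filtration of Z
  (Y being adapted to it): for every s <= t, every event A of F^Z_s (it suffices to take
  finite cylinders, which form a generating pi-system), and all values y, j: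
  P(Y_t = j, Y_s = y, A) P(Y_s = y) = P(Y_t = j, Y_s = y) P(Y_s = y, A),
  i.e. P(Y_t = j | F^Z_s) = P(Y_t = j | Y_s).\<close>
definition markov_wrt ::
  "'w measure \<Rightarrow> (real \<Rightarrow> 'w \<Rightarrow> 'z) \<Rightarrow> (real \<Rightarrow> 'w \<Rightarrow> 'y) \<Rightarrow> bool" where
  "markov_wrt M Z Y \<longleftrightarrow>
     (\<forall>(cyl :: (real \<times> 'z) list) s t y j.
        (\<forall>(u,z)\<in>set cyl. 0 \<le> u \<and> u \<le> s) \<longrightarrow> 0 \<le> s \<longrightarrow> s \<le> t \<longrightarrow>
        measure M {\<omega>\<in>space M. Y t \<omega> = j \<and> Y s \<omega> = y \<and> (\<forall>(u,z)\<in>set cyl. Z u \<omega> = z)}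
          * measure M {\<omega>\<in>space M. Y s \<omega> = y}
        = measure M {\<omega>\<in>space M. Y t \<omega> = j \<and> Y s \<omega> = y}
          * measure M {\<omega>\<in>space M. Y s \<omega> = y \<and> (\<forall>(u,z)\<in>set cyl. Z u \<omega> = z)})"

end

theory Submission imports Defs begin

lemma mpow_bound:
  assumes B: "\<forall>k<N. \<forall>j<N. \<bar>A k j\<bar> \<le> K" and K: "0 \<le> K"
  shows "j < N \<Longrightarrow> \<bar>mpow N A n i j\<bar> \<le> (real N * K)^n"
proof (induction n arbitrary: j)
  case 0 then show ?case by simp
next
  case (Suc n)
  have "\<bar>mpow N A (Suc n) i j\<bar> \<le> (\<Sum>k<N. \<bar>mpow N A n i k\<bar> * \<bar>A k j\<bar>)"
    by (simp add: abs_mult[symmetric] sum_abs)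
  also have "\<dots> \<le> (\<Sum>k<N. (real N * K)^n * K)"
    apply (rule sum_mono)
    apply (rule mult_mono)
    using Suc B K by auto
  also have "\<dots> = (real N * K)^Suc n" by simp
  finally show ?case .
qed

lemma mpow_one: assumes "i < N" shows "mpow N A 1 i j = A i j"
proof -
  have "mpow N A 1 i j = (\<Sum>k<N. (if i = k then 1 else 0) * A k j)" by simp
  also have "\<dots> = (\<Sum>k<N. if i = k then A k j else 0)" by (rule sum.cong) auto
  also have "\<dots> = A i j" using assms by simp
  finally show ?thesis .
qed

lemma mexp_approx:
  assumes B: "\<forall>k<N. \<forall>j<N. \<bar>A k j\<bar> \<le> K" and K: "0 \<le> K"
    and ij: "i < N" "j < N" and t: "0 \<le> t" "t * (real N * K) \<le> 1"
  shows "\<bar>mexp N A t i j - ((if i = j then 1 else 0) + t * A i j)\<bar> \<le> (t * (real N * K))^2"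
proof -
  define x where "x = t * (real N * K)"
  have x0: "0 \<le> x" unfolding x_def using t K by simp
  define f where "f n = t ^ n / fact n * mpow N A n i j" for n
  define g where "g n = x ^ n / fact n" for n
  have fg: "\<bar>f n\<bar> \<le> g n" for n
  proof -
    have "\<bar>f n\<bar> = t^n / fact n * \<bar>mpow N A n i j\<bar>" unfolding f_def using t
      by (simp add: abs_mult)
    also have "\<dots> \<le> t^n / fact n * (real N * K)^n"
      by (rule mult_left_mono[OF mpow_bound[OF B K ij(2)]]) (use t in simp)
    also have "\<dots> = g n" unfolding g_def x_def by (simp add: power_mult_distrib)
    finally show ?thesis .
  qed
  have sg: "summable g" using summable_exp[of x] unfolding g_def by (simp add: field_simps)
  have sf: "summable f" by (rule summable_comparison_test[of _ g]) (use fg sg in auto)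
  have "mexp N A t i j = suminf f" unfolding mexp_def f_def ..
  also have "\<dots> = (\<Sum>n. f (n+2)) + (\<Sum>i<2. f i)" by (rule suminf_split_initial_segment[OF sf])
  also have "(\<Sum>i<2. f i) = (if i = j then 1 else 0) + t * A i j"
    by (simp add: f_def eval_nat_numeral mpow_one[OF ij(1), simplified])
  finally have eq: "mexp N A t i j - ((if i = j then 1 else 0) + t * A i j) = (\<Sum>n. f (n+2))" by simp
  have sf2: "summable (\<lambda>n. f (n+2))" by (rule summable_ignore_initial_segment[OF sf])
  have sg2: "summable (\<lambda>n. g (n+2))" by (rule summable_ignore_initial_segment[OF sg])
  have "\<bar>\<Sum>n. f (n+2)\<bar> \<le> (\<Sum>n. \<bar>f (n+2)\<bar>)"
    by (rule summable_rabs) (rule summable_rabs_comparison_test[OF _ sg2], use fg in auto)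
  also have "\<dots> \<le> (\<Sum>n. g (n+2))"
    by (rule suminf_le) (use fg sg2 summable_rabs_comparison_test[OF _ sg2] in auto)
  also have "(\<Sum>n. g (n+2)) = exp x - 1 - x"
    using exp_first_two_terms[of x] unfolding g_def by (simp add: field_simps)
  also have "\<dots> \<le> x^2" using exp_bound[OF x0] t unfolding x_def by simp
  finally show ?thesis using eq unfolding x_def by simp
qed

lemma Gen_col0: "i \<noteq> 0 \<Longrightarrow> mpow 4 (Gen a b c d e f g) n i 0 = 0"
proof (induction n)
  case 0 then show ?case by simp
next
  case (Suc n)
  then show ?case by (simp add: Gen_def numeral_eq_Suc lessThan_Suc)
qed

lemma mexp_col0: "i \<noteq> 0 \<Longrightarrow> mexp 4 (Gen a b c d e f g) t i 0 = 0"
  by (simp add: mexp_def Gen_col0)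

lemma Gen_bound:
  assumes "a > 0" "b > 0" "c > 0" "d > 0" "e > 0" "f > 0" "g > 0"
  shows "\<forall>k<4. \<forall>j<4. \<bar>Gen a b c d e f g k j\<bar> \<le> a+b+c+d+e+f+g"
  using assms by (auto simp: Gen_def numeral_eq_Suc less_Suc_eq)

lemma evs: "X \<in> M \<rightarrow>\<^sub>M count_space UNIV \<Longrightarrow> {\<omega>\<in>space M. P (X \<omega>)} \<in> sets M"
proof -
  assume X: "X \<in> M \<rightarrow>\<^sub>M count_space UNIV"
  have "{\<omega>\<in>space M. P (X \<omega>)} = X -` {x. P x} \<inter> space M" by auto
  then show ?thesis using measurable_sets[OF X, of "{x. P x}"] by simp
qed

lemma sconj: "{\<omega>\<in>space M. P \<omega>} \<in> sets M \<Longrightarrow> {\<omega>\<in>space M. Q \<omega>} \<in> sets M \<Longrightarrow>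
   {\<omega>\<in>space M. P \<omega> \<and> Q \<omega>} \<in> sets M"
proof -
  assume "{\<omega>\<in>space M. P \<omega>} \<in> sets M" "{\<omega>\<in>space M. Q \<omega>} \<in> sets M"
  moreover have "{\<omega>\<in>space M. P \<omega> \<and> Q \<omega>} = {\<omega>\<in>space M. P \<omega>} \<inter> {\<omega>\<in>space M. Q \<omega>}" by auto
  ultimately show ?thesis by simp
qed

lemma split_snd:
  fixes Z :: "'w \<Rightarrow> nat \<times> nat"
  assumes fm: "finite_measure M" and rng: "\<forall>\<omega>\<in>space M. Z \<omega> \<in> {(0,0),(0,1),(1,0),(1,1)}"
    and Z: "Z \<in> M \<rightarrow>\<^sub>M count_space UNIV"
    and A: "{\<omega>\<in>space M. A \<omega>} \<in> sets M" and B: "{\<omega>\<in>space M. B \<omega>} \<in> sets M"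
  shows "measure M {\<omega>\<in>space M. A \<omega> \<and> snd (Z \<omega>) = y \<and> B \<omega>} =
    measure M {\<omega>\<in>space M. A \<omega> \<and> Z \<omega> = (0,y) \<and> B \<omega>} + measure M {\<omega>\<in>space M. A \<omega> \<and> Z \<omega> = (1,y) \<and> B \<omega>}"
proof -
  have eq: "{\<omega>\<in>space M. A \<omega> \<and> snd (Z \<omega>) = y \<and> B \<omega>} =
     {\<omega>\<in>space M. A \<omega> \<and> Z \<omega> = (0,y) \<and> B \<omega>} \<union> {\<omega>\<in>space M. A \<omega> \<and> Z \<omega> = (1,y) \<and> B \<omega>}"
    using rng by auto
  have s1: "{\<omega>\<in>space M. A \<omega> \<and> Z \<omega> = (0,y) \<and> B \<omega>} \<in> sets M"
    by (intro sconj A B evs[OF Z])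
  have s2: "{\<omega>\<in>space M. A \<omega> \<and> Z \<omega> = (1,y) \<and> B \<omega>} \<in> sets M"
    by (intro sconj A B evs[OF Z])
  show ?thesis unfolding eq
    by (rule finite_measure.finite_measure_Union[OF fm s1 s2]) auto
qed

lemma st_vals: "st_idx (0,0) = 0" "st_idx (0,1) = 1" "st_idx (1,0) = 2" "st_idx (1,1) = 3" "st_idx (Suc 0,0) = 2" "st_idx (Suc 0,1) = 3" "st_idx (0, Suc 0) = 1" "st_idx (Suc 0, Suc 0) = 3"
  by (simp_all add: st_idx_def)

lemma key:
  fixes X :: "real \<Rightarrow> 'w \<Rightarrow> nat \<times> nat" and p :: "nat \<Rightarrow> nat \<Rightarrow> real"
  assumes fm: "finite_measure M"
    and rs: "\<forall>\<omega>\<in>space M. X s \<omega> \<in> {(0,0),(0,1),(1,0),(1,1)}"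
    and rt: "\<forall>\<omega>\<in>space M. X t \<omega> \<in> {(0,0),(0,1),(1,0),(1,1)}"
    and ms: "X s \<in> M \<rightarrow>\<^sub>M count_space UNIV" and mt: "X t \<in> M \<rightarrow>\<^sub>M count_space UNIV"
    and mC: "{\<omega>\<in>space M. C \<omega>} \<in> sets M"
    and MRC: "\<And>i j. i \<in> {(0,0),(1,0)} \<Longrightarrow> j \<in> {(0,0),(1,0)} \<Longrightarrow> measure M {\<omega>\<in>space M. X t \<omega> = j \<and> X s \<omega> = i \<and> C \<omega>}
                  = measure M {\<omega>\<in>space M. X s \<omega> = i \<and> C \<omega>} * p (st_idx i) (st_idx j)"
    and MR0: "\<And>i j. i \<in> {(0,0),(1,0)} \<Longrightarrow> j \<in> {(0,0),(1,0)} \<Longrightarrow> measure M {\<omega>\<in>space M. X t \<omega> = j \<and> X s \<omega> = i}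
                  = measure M {\<omega>\<in>space M. X s \<omega> = i} * p (st_idx i) (st_idx j)"
    and p20: "p 2 0 = 0"
    and n0: "measure M {\<omega>\<in>space M. X s \<omega> = (0,0) \<and> C \<omega>} = 0"
    and n2: "measure M {\<omega>\<in>space M. X s \<omega> = (1,0) \<and> C \<omega>} > 0"
    and m0: "measure M {\<omega>\<in>space M. X s \<omega> = (0,0)} > 0"
    and D: "p 0 0 + p 0 2 \<noteq> p 2 2"
  shows "measure M {\<omega>\<in>space M. snd (X t \<omega>) = 0 \<and> snd (X s \<omega>) = 0 \<and> C \<omega>}
          * measure M {\<omega>\<in>space M. snd (X s \<omega>) = 0}
       \<noteq> measure M {\<omega>\<in>space M. snd (X t \<omega>) = 0 \<and> snd (X s \<omega>) = 0}
          * measure M {\<omega>\<in>space M. snd (X s \<omega>) = 0 \<and> C \<omega>}"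
proof -
  have sp: "{\<omega>\<in>space M. True} \<in> sets M" by simp
  have ys: "\<And>y. {\<omega>\<in>space M. snd (X s \<omega>) = y} \<in> sets M" by (rule evs[OF ms])
  have xt: "\<And>j. {\<omega>\<in>space M. X t \<omega> = j} \<in> sets M" by (rule evs[OF mt])
  note spl = split_snd[OF fm, where y=0]
  define n2v where "n2v = measure M {\<omega>\<in>space M. X s \<omega> = (1,0) \<and> C \<omega>}"
  define m0v where "m0v = measure M {\<omega>\<in>space M. X s \<omega> = (0,0)}"
  define m2v where "m2v = measure M {\<omega>\<in>space M. X s \<omega> = (1,0)}"
  have E1a: "measure M {\<omega>\<in>space M. snd (X t \<omega>) = 0 \<and> snd (X s \<omega>) = 0 \<and> C \<omega>}
     = measure M {\<omega>\<in>space M. X t \<omega> = (0,0) \<and> snd (X s \<omega>) = 0 \<and> C \<omega>}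
     + measure M {\<omega>\<in>space M. X t \<omega> = (1,0) \<and> snd (X s \<omega>) = 0 \<and> C \<omega>}"
    using spl[where A="\<lambda>_. True", OF rt mt sp sconj[OF ys mC]] by simp
  have E1b: "measure M {\<omega>\<in>space M. X t \<omega> = j \<and> snd (X s \<omega>) = 0 \<and> C \<omega>}
     = measure M {\<omega>\<in>space M. X s \<omega> = (0,0) \<and> C \<omega>} * p 0 (st_idx j)
     + n2v * p 2 (st_idx j)" if "j \<in> {(0,0),(1,0)}" for j
    using that spl[OF rs ms xt mC] MRC[of "(0,0)" j] MRC[of "(1,0)" j] by (simp add: st_vals n2v_def)
  have E1: "measure M {\<omega>\<in>space M. snd (X t \<omega>) = 0 \<and> snd (X s \<omega>) = 0 \<and> C \<omega>} = n2v * p 2 2"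
    using E1a E1b[of "(0,0)"] E1b[of "(1,0)"] n0 p20 by (simp add: st_vals)
  have E2: "measure M {\<omega>\<in>space M. snd (X s \<omega>) = 0} = m0v + m2v"
    using spl[where A="\<lambda>_. True" and B="\<lambda>_. True", OF rs ms sp sp] by (simp add: m0v_def m2v_def)
  have E3a: "measure M {\<omega>\<in>space M. snd (X t \<omega>) = 0 \<and> snd (X s \<omega>) = 0}
     = measure M {\<omega>\<in>space M. X t \<omega> = (0,0) \<and> snd (X s \<omega>) = 0}
     + measure M {\<omega>\<in>space M. X t \<omega> = (1,0) \<and> snd (X s \<omega>) = 0}"
    using spl[where A="\<lambda>_. True", OF rt mt sp ys] by simp
  have E3b: "measure M {\<omega>\<in>space M. X t \<omega> = j \<and> snd (X s \<omega>) = 0}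
     = m0v * p 0 (st_idx j) + m2v * p 2 (st_idx j)" if "j \<in> {(0,0),(1,0)}" for j
    using that spl[where B="\<lambda>_. True", OF rs ms xt sp] MR0[of "(0,0)" j] MR0[of "(1,0)" j]
    by (simp add: st_vals m0v_def m2v_def)
  have E3: "measure M {\<omega>\<in>space M. snd (X t \<omega>) = 0 \<and> snd (X s \<omega>) = 0} = m0v * (p 0 0 + p 0 2) + m2v * p 2 2"
    using E3a E3b[of "(0,0)"] E3b[of "(1,0)"] p20 by (simp add: st_vals algebra_simps)
  have E4: "measure M {\<omega>\<in>space M. snd (X s \<omega>) = 0 \<and> C \<omega>} = n2v"
    using spl[where A="\<lambda>_. True", OF rs ms sp mC] n0 by (simp add: n2v_def)
  have "n2v * m0v * (p 2 2 - (p 0 0 + p 0 2)) \<noteq> 0"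
    using n2 m0 D unfolding n2v_def m0v_def by simp
  then show ?thesis unfolding E1 E2 E3 E4 by (auto simp: algebra_simps)
qed

lemma estimates:
  fixes a b c d e f g :: real and pp :: "real \<Rightarrow> nat \<Rightarrow> nat \<Rightarrow> real"
  assumes pos: "a > 0" "b > 0" "c > 0" "d > 0" "e > 0" "f > 0" "g > 0"
    and bcf: "b + c \<noteq> f"
    and AP: "\<And>r i j. 0 \<le> r \<Longrightarrow> r * (4 * (a+b+c+d+e+f+g)) \<le> 1 \<Longrightarrow> i < 4 \<Longrightarrow> j < 4 \<Longrightarrow>
      \<bar>pp r i j - ((if i = j then 1 else 0) + r * Gen a b c d e f g i j)\<bar> \<le> (r * (4 * (a+b+c+d+e+f+g)))^2"
  shows "\<exists>h>0. pp h 0 1 > 0 \<and> pp h 1 2 > 0 \<and> pp (2*h) 0 0 > 0 \<and> pp h 0 0 + pp h 0 2 \<noteq> pp h 2 2"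
proof -
  define L where "L = 4 * (a+b+c+d+e+f+g)"
  define m where "m = min b (min d \<bar>f-(b+c)\<bar>)"
  define h where "h = min (1/(4*L)) (m/(4*L^2))"
  have L0: "L > 0" unfolding L_def using pos by simp
  have m0: "m > 0" unfolding m_def using pos bcf by auto
  have mb: "m \<le> b" "m \<le> d" "m \<le> \<bar>f-(b+c)\<bar>" unfolding m_def by auto
  have h0: "h > 0" unfolding h_def using L0 m0 by simp
  have hL: "h * L \<le> 1/4"
  proof -
    have "h \<le> 1/(4*L)" unfolding h_def by simp
    then have "h * L \<le> 1/(4*L) * L" by (rule mult_right_mono) (use L0 in simp)
    also have "\<dots> = 1/4" using L0 by simp
    finally show ?thesis .
  qed
  have hL2: "h * L^2 \<le> m/4"
  proof -
    have "h \<le> m/(4*L^2)" unfolding h_def by simp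
    then have "h * L^2 \<le> m/(4*L^2) * L^2" by (rule mult_right_mono) simp
    also have "\<dots> = m/4" using L0 by simp
    finally show ?thesis .
  qed
  define E where "E = (h*L)^2"
  have E0: "E \<ge> 0" unfolding E_def by simp
  have EE: "E \<le> h * (m/4)"
  proof -
    have "E = h * (h * L^2)" unfolding E_def by (simp add: power2_eq_square)
    also have "\<dots> \<le> h * (m/4)" using hL2 h0 by (simp add: mult_left_mono)
    finally show ?thesis .
  qed
  have K: "a+b+c \<le> L" unfolding L_def using pos by simp
  have ap: "\<bar>pp h i j - ((if i = j then 1 else 0) + h * Gen a b c d e f g i j)\<bar> \<le> E"
    if "i < 4" "j < 4" for i j
    using AP[OF _ _ that, of h] h0 hL L0 unfolding E_def L_def by simp
  have a01: "\<bar>pp h 0 1 - h * b\<bar> \<le> E" using ap[of 0 1] by (simp add: Gen_def)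
  have a12: "\<bar>pp h 1 2 - h * d\<bar> \<le> E" using ap[of 1 2] by (simp add: Gen_def)
  have a00: "\<bar>pp h 0 0 - (1 - h*(a+b+c))\<bar> \<le> E" using ap[of 0 0] by (simp add: Gen_def algebra_simps)
  have a02: "\<bar>pp h 0 2 - h * a\<bar> \<le> E" using ap[of 0 2] by (simp add: Gen_def)
  have a22: "\<bar>pp h 2 2 - (1 - h*f)\<bar> \<le> E" using ap[of 2 2] by (simp add: Gen_def algebra_simps)
  have b2: "\<bar>pp (2*h) 0 0 - (1 - 2*h*(a+b+c))\<bar> \<le> (2*h*L)^2"
    using AP[of "2*h" 0 0] h0 hL unfolding L_def by (simp add: Gen_def algebra_simps)
  have hb: "h * m \<le> h * b" "h * m \<le> h * d" "h * m \<le> h * \<bar>f-(b+c)\<bar>"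
    using mb h0 by (simp_all add: mult_left_mono)
  have hm: "h * m > 0" using h0 m0 by simp
  have p01: "pp h 0 1 > 0" using a01 EE hb hm by (simp add: abs_le_iff)
  have p12: "pp h 1 2 > 0" using a12 EE hb hm by (simp add: abs_le_iff)
  have t1: "2*h*(a+b+c) \<le> 1/2"
  proof -
    have "2*h*(a+b+c) \<le> 2*h*L" using K h0 by simp
    then show ?thesis using hL by simp
  qed
  have t2: "(2*h*L)^2 \<le> (1/2)^2"
    by (rule power_mono) (use hL h0 L0 in auto)
  have p00: "pp (2*h) 0 0 > 0" using b2 t1 t2 by (simp add: abs_le_iff power2_eq_square)
  have hf: "\<bar>h * (f - (b+c))\<bar> = h * \<bar>f-(b+c)\<bar>" using h0 by (simp add: abs_mult)
  have D: "pp h 0 0 + pp h 0 2 \<noteq> pp h 2 2"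
  proof
    assume eq: "pp h 0 0 + pp h 0 2 = pp h 2 2"
    have "\<bar>h * (f - (b+c))\<bar> \<le> 3 * E"
      using a00 a02 a22 eq by (simp add: abs_le_iff algebra_simps)
    then show False using hf hb EE hm by linarith
  qed
  show ?thesis using h0 p01 p12 p00 D by blast
qed

theorem mainTheorem10:
  fixes M :: "'w measure" and X :: "real \<Rightarrow> 'w \<Rightarrow> nat \<times> nat"
    and a b c d e f g :: real
  assumes "a > 0" "b > 0" "c > 0" "d > 0" "e > 0" "f > 0" "g > 0"
    and "b + c \<noteq> f"
    and "markov_chain_gen M X {(0,0),(0,1),(1,0),(1,1)} st_idx (Gen a b c d e f g)"
    and "AE \<omega> in M. X 0 \<omega> = (0,0)"
  shows "\<not> markov_wrt M (\<lambda>t \<omega>. snd (X t \<omega>)) (\<lambda>t \<omega>. snd (X t \<omega>))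
         \<and> \<not> markov_wrt M X (\<lambda>t \<omega>. snd (X t \<omega>))"
proof -
  define S :: "(nat \<times> nat) set" where "S = {(0,0),(0,1),(1,0),(1,1)}"
  define pp where "pp r i j = mexp 4 (Gen a b c d e f g) r i j" for r i j
  have cardS: "card S = 4" unfolding S_def by simp
  have PS: "prob_space M" and meas: "\<And>t. t \<ge> 0 \<Longrightarrow> X t \<in> M \<rightarrow>\<^sub>M count_space UNIV"
    and rng: "\<And>t. t \<ge> 0 \<Longrightarrow> \<forall>\<omega>\<in>space M. X t \<omega> \<in> {(0,0),(0,1),(1,0),(1,1)}"
    and MR: "\<forall>(cyl :: (real \<times> (nat\<times>nat)) list) s t i j.
        (\<forall>(u,z)\<in>set cyl. 0 \<le> u \<and> u \<le> s) \<longrightarrow> 0 \<le> s \<longrightarrow> s \<le> t \<longrightarrow> i \<in> S \<longrightarrow> j \<in> S \<longrightarrow>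
        measure M {\<omega>\<in>space M. X t \<omega> = j \<and> X s \<omega> = i \<and> (\<forall>(u,z)\<in>set cyl. X u \<omega> = z)}
        = measure M {\<omega>\<in>space M. X s \<omega> = i \<and> (\<forall>(u,z)\<in>set cyl. X u \<omega> = z)}
          * pp (t - s) (st_idx i) (st_idx j)"
  proof -
    have H: "markov_chain_gen M X S st_idx (Gen a b c d e f g)" using assms(9) unfolding S_def .
    note H' = H[unfolded markov_chain_gen_def cardS, folded pp_def]
    show "prob_space M" using H' by blast
    show "\<And>t. t \<ge> 0 \<Longrightarrow> X t \<in> M \<rightarrow>\<^sub>M count_space UNIV" using H' by blast
    show "\<And>t. t \<ge> 0 \<Longrightarrow> \<forall>\<omega>\<in>space M. X t \<omega> \<in> {(0,0),(0,1),(1,0),(1,1)}"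
      using H' unfolding S_def by blast
    show "\<forall>(cyl :: (real \<times> (nat\<times>nat)) list) s t i j.
        (\<forall>(u,z)\<in>set cyl. 0 \<le> u \<and> u \<le> s) \<longrightarrow> 0 \<le> s \<longrightarrow> s \<le> t \<longrightarrow> i \<in> S \<longrightarrow> j \<in> S \<longrightarrow>
        measure M {\<omega>\<in>space M. X t \<omega> = j \<and> X s \<omega> = i \<and> (\<forall>(u,z)\<in>set cyl. X u \<omega> = z)}
        = measure M {\<omega>\<in>space M. X s \<omega> = i \<and> (\<forall>(u,z)\<in>set cyl. X u \<omega> = z)}
          * pp (t - s) (st_idx i) (st_idx j)"
      using H'[THEN conjunct2, THEN conjunct2, THEN conjunct2] .
  qed
  interpret prob_space M by (rule PS)
  have fm: "finite_measure M" by unfold_locales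
  have MR1: "measure M {\<omega>\<in>space M. X t \<omega> = j \<and> X s \<omega> = i \<and> X u \<omega> = x}
        = measure M {\<omega>\<in>space M. X s \<omega> = i \<and> X u \<omega> = x} * pp (t - s) (st_idx i) (st_idx j)"
    if "0 \<le> u" "u \<le> s" "s \<le> t" "i \<in> S" "j \<in> S" for u s t i j x
    using MR[rule_format, of "[(u,x)]" s t i j] that by simp
  have MR0: "measure M {\<omega>\<in>space M. X t \<omega> = j \<and> X s \<omega> = i}
        = measure M {\<omega>\<in>space M. X s \<omega> = i} * pp (t - s) (st_idx i) (st_idx j)"
    if "0 \<le> s" "s \<le> t" "i \<in> S" "j \<in> S" for s t i j
    using MR[rule_format, of "[]" s t i j] that by simp
  have P0: "measure M {\<omega>\<in>space M. X 0 \<omega> = (0,0)} = 1"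
    using prob_Collect_eq_1[OF evs[OF meas[of 0]], of "\<lambda>x. x = (0,0)"] assms(10) by simp
  have AP: "\<And>r i j. 0 \<le> r \<Longrightarrow> r * (4 * (a+b+c+d+e+f+g)) \<le> 1 \<Longrightarrow> i < 4 \<Longrightarrow> j < 4 \<Longrightarrow>
      \<bar>pp r i j - ((if i = j then 1 else 0) + r * Gen a b c d e f g i j)\<bar> \<le> (r * (4 * (a+b+c+d+e+f+g)))^2"
    unfolding pp_def using mexp_approx[where N=4, OF Gen_bound[OF assms(1-7)]] assms(1-7) by simp
  obtain h where h0: "h > 0" and p01: "pp h 0 1 > 0" and p12: "pp h 1 2 > 0"
    and p00: "pp (2*h) 0 0 > 0" and D: "pp h 0 0 + pp h 0 2 \<noteq> pp h 2 2"
    using estimates[OF assms(1-8) AP] by blast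
  have tt: "3*h - 2*h = h" "2*h - h = h" "h - 0 = h" "2*h - 0 = 2*h" by simp_all
  have p20: "pp h 2 0 = 0" "pp h 1 0 = 0" "pp h 3 0 = 0" unfolding pp_def by (simp_all add: mexp_col0)
  have inS: "(0,0) \<in> S" "(0,1) \<in> S" "(1,0) \<in> S" "(1,1) \<in> S" unfolding S_def by auto
  have hh: "0 \<le> h" "h \<le> 2*h" "2*h \<le> 3*h" "0 \<le> 2*h" "0 \<le> 3*h" using h0 by simp_all
  have sp: "{\<omega>\<in>space M. True} \<in> sets M" by simp
  have ev: "\<And>t P. 0 \<le> t \<Longrightarrow> {\<omega>\<in>space M. P (X t \<omega>)} \<in> sets M" by (rule evs[OF meas])
  note spl = split_snd[OF fm rng meas]
  have s2: "measure M {\<omega>\<in>space M. X (2*h) \<omega> = i \<and> snd (X h \<omega>) = 1}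
     = measure M {\<omega>\<in>space M. X (2*h) \<omega> = i \<and> X h \<omega> = (0,1)}
     + measure M {\<omega>\<in>space M. X (2*h) \<omega> = i \<and> X h \<omega> = (1,1)}" for i
    using spl[where A="\<lambda>\<omega>. X (2*h) \<omega> = i" and B="\<lambda>_. True" and y=1, OF hh(1) hh(1) ev[OF hh(4)] sp]
    by simp
  have s3: "measure M {\<omega>\<in>space M. X (3*h) \<omega> = j \<and> X (2*h) \<omega> = i \<and> snd (X h \<omega>) = 1}
     = measure M {\<omega>\<in>space M. X (3*h) \<omega> = j \<and> X (2*h) \<omega> = i \<and> X h \<omega> = (0,1)}
     + measure M {\<omega>\<in>space M. X (3*h) \<omega> = j \<and> X (2*h) \<omega> = i \<and> X h \<omega> = (1,1)}" for i j
    using spl[where A="\<lambda>\<omega>. X (3*h) \<omega> = j \<and> X (2*h) \<omega> = i" and B="\<lambda>_. True" and y=1,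
       OF hh(1) hh(1) sconj[OF ev[OF hh(5)] ev[OF hh(4)]] sp]
    by (simp add: conj_assoc)
  have MRCY: "measure M {\<omega>\<in>space M. X (3*h) \<omega> = j \<and> X (2*h) \<omega> = i \<and> snd (X h \<omega>) = 1}
     = measure M {\<omega>\<in>space M. X (2*h) \<omega> = i \<and> snd (X h \<omega>) = 1} * pp h (st_idx i) (st_idx j)"
    if "i \<in> {(0,0),(1,0)}" "j \<in> {(0,0),(1,0)}" for i j
  proof -
    have iS: "i \<in> S" "j \<in> S" using that unfolding S_def by auto
    show ?thesis unfolding s2 s3 MR1[OF hh(1-3) iS] tt by (simp add: algebra_simps)
  qed
  have MRCX: "measure M {\<omega>\<in>space M. X (3*h) \<omega> = j \<and> X (2*h) \<omega> = i \<and> X h \<omega> = (0,1)}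
     = measure M {\<omega>\<in>space M. X (2*h) \<omega> = i \<and> X h \<omega> = (0,1)} * pp h (st_idx i) (st_idx j)"
    if "i \<in> {(0,0),(1,0)}" "j \<in> {(0,0),(1,0)}" for i j
  proof -
    have iS: "i \<in> S" "j \<in> S" using that unfolding S_def by auto
    show ?thesis unfolding MR1[OF hh(1-3) iS] tt ..
  qed
  have MR0': "measure M {\<omega>\<in>space M. X (3*h) \<omega> = j \<and> X (2*h) \<omega> = i}
     = measure M {\<omega>\<in>space M. X (2*h) \<omega> = i} * pp h (st_idx i) (st_idx j)"
    if "i \<in> {(0,0),(1,0)}" "j \<in> {(0,0),(1,0)}" for i j
  proof -
    have iS: "i \<in> S" "j \<in> S" using that unfolding S_def by auto
    show ?thesis unfolding MR0[OF hh(4) hh(3) iS] tt ..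
  qed
  have n0X: "measure M {\<omega>\<in>space M. X (2*h) \<omega> = (0,0) \<and> X h \<omega> = x} = 0"
    if "x \<in> {(0,1),(1,1)}" for x
  proof -
    have xS: "x \<in> S" using that unfolding S_def by auto
    show ?thesis unfolding MR0[OF hh(1) hh(2) xS inS(1)] tt using that p20 by (auto simp: st_vals)
  qed
  have n0Y: "measure M {\<omega>\<in>space M. X (2*h) \<omega> = (0,0) \<and> snd (X h \<omega>) = 1} = 0"
    unfolding s2 using n0X by simp
  have q1: "measure M {\<omega>\<in>space M. X h \<omega> = (0,1) \<and> X 0 \<omega> = (0,0)} = pp h 0 1"
    using MR0[OF order_refl hh(1) inS(1) inS(2)] P0 tt by (simp add: st_vals)
  have q2: "measure M {\<omega>\<in>space M. X (2*h) \<omega> = (1,0) \<and> X h \<omega> = (0,1) \<and> X 0 \<omega> = (0,0)} = pp h 0 1 * pp h 1 2"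
    using MR1[OF order_refl hh(1) hh(2) inS(2) inS(3)] q1 tt by (simp add: st_vals)
  have n2X: "measure M {\<omega>\<in>space M. X (2*h) \<omega> = (1,0) \<and> X h \<omega> = (0,1)} > 0"
  proof -
    have "measure M {\<omega>\<in>space M. X (2*h) \<omega> = (1,0) \<and> X h \<omega> = (0,1) \<and> X 0 \<omega> = (0,0)}
      \<le> measure M {\<omega>\<in>space M. X (2*h) \<omega> = (1,0) \<and> X h \<omega> = (0,1)}"
      by (rule finite_measure_mono) (auto intro!: sconj ev hh)
    moreover have "pp h 0 1 * pp h 1 2 > 0" using p01 p12 by simp
    ultimately show ?thesis using q2 by simp
  qed
  have n2Y: "measure M {\<omega>\<in>space M. X (2*h) \<omega> = (1,0) \<and> snd (X h \<omega>) = 1} > 0"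
    unfolding s2 using n2X by (simp add: add_pos_nonneg)
  have m0: "measure M {\<omega>\<in>space M. X (2*h) \<omega> = (0,0)} > 0"
  proof -
    have "measure M {\<omega>\<in>space M. X (2*h) \<omega> = (0,0) \<and> X 0 \<omega> = (0,0)}
      \<le> measure M {\<omega>\<in>space M. X (2*h) \<omega> = (0,0)}"
      by (rule finite_measure_mono) (auto intro!: ev hh)
    moreover have "measure M {\<omega>\<in>space M. X (2*h) \<omega> = (0,0) \<and> X 0 \<omega> = (0,0)} = pp (2*h) 0 0"
      using MR0[OF order_refl hh(4) inS(1) inS(1)] P0 tt by (simp add: st_vals)
    ultimately show ?thesis using p00 by simp
  qed
  note KY = key[where s="2*h" and t="3*h" and C="\<lambda>\<omega>. snd (X h \<omega>) = 1" and p="pp h" and M=M and X=X, OF fm rng[OF hh(4)] rng[OF hh(5)] meas[OF hh(4)] meas[OF hh(5)] ev[OF hh(1), of "\<lambda>x. snd x = 1"]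
     MRCY MR0' p20(1) n0Y n2Y m0 D]
  have n0X': "measure M {\<omega>\<in>space M. X (2*h) \<omega> = (0,0) \<and> X h \<omega> = (0,1)} = 0"
    by (rule n0X) simp
  note KX = key[where s="2*h" and t="3*h" and C="\<lambda>\<omega>. X h \<omega> = (0,1)" and p="pp h" and M=M and X=X,
     OF fm rng[OF hh(4)] rng[OF hh(5)] meas[OF hh(4)] meas[OF hh(5)] ev[OF hh(1), of "\<lambda>x. x = (0,1)"]
     MRCX MR0' p20(1) n0X' n2X m0 D]
  show ?thesis
  proof
    show "\<not> markov_wrt M (\<lambda>t \<omega>. snd (X t \<omega>)) (\<lambda>t \<omega>. snd (X t \<omega>))"
    proof
      assume mw: "markov_wrt M (\<lambda>t \<omega>. snd (X t \<omega>)) (\<lambda>t \<omega>. snd (X t \<omega>))"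
      have "(\<forall>(u,z)\<in>set [(h,1::nat)]. 0 \<le> u \<and> u \<le> 2*h)" using hh by simp
      from mw[unfolded markov_wrt_def, THEN spec[of _ "[(h,1::nat)]"], THEN spec[of _ "2*h"], THEN spec[of _ "3*h"], THEN spec[of _ "0::nat"], THEN spec[of _ "0::nat"]] KY hh show False by simp
    qed
    show "\<not> markov_wrt M X (\<lambda>t \<omega>. snd (X t \<omega>))"
    proof
      assume mw: "markov_wrt M X (\<lambda>t \<omega>. snd (X t \<omega>))"
      have "(\<forall>(u,z)\<in>set [(h,(0::nat,1::nat))]. 0 \<le> u \<and> u \<le> 2*h)" using hh by simp
      from mw[unfolded markov_wrt_def, THEN spec[of _ "[(h,(0::nat,1::nat))]"], THEN spec[of _ "2*h"], THEN spec[of _ "3*h"], THEN spec[of _ "0::nat"], THEN spec[of _ "0::nat"]] KX hh show False by simp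
    qed
  qed
qed

end
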